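(* Let $N\ge2$, $d\ge1$, and let $\tilde\psi:\mathbb{R}\to\mathbb{R}$ be a positive, bounded, continuous function with $\tilde K:=\|\tilde\psi\|_\infty$ satisfying $$\int_0^\infty\min_{r\in[0,x]}\tilde\psi(r)\,dx=+\infty.$$ Let $\{t_n\}_{n\in\mathbb{N}_0}$ be an increasing sequence of nonnegative numbers with $t_0=0$, $t_n\to\infty$, and define $\alpha:[0,\infty)\to\{-1,1\}$ by $\alpha(0)=1$, $\alpha(t)=1$ on $(t_{2n},t_{2n+1})$, $\alpha(t)=-1$ on $[t_{2n+1},t_{2n+2}]$, $n\in\mathbb{N}_0$. Assume $$t_{2n+2}-t_{2n+1}<\frac{\ln2}{\tilde K},\qquad t_{2n+1}-t_{2n}>\frac1{\tilde K}\qquad\forall n\in\mathbb{N}_0,$$ and $$\sum_{p=0}^{\infty}\ln\left(\frac{e^{\tilde K(t_{2p+2}-t_{2p+1})}}{2-e^{\tilde K(t_{2p+2}-t_{2p+1})}}\right)<+\infty.$$ Then every solution $\{(x_i,v_i)\}_{i=1,\dots,N}$ of $$\frac{d}{dt}x_i(t)=v_i(t),\qquad \frac{d}{dt}v_i(t)=\frac{1}{N-1}\sum_{j\ne i}\alpha(t)\,\tilde\psi(|x_i(t)-x_j(t)|)\,(v_j(t)-v_i(t)),\quad t>0,$$ with $x_i(0)=x_i^0$, $v_i(0)=v_i^0\in\mathbb{R}^d$, exhibits asymptotic flocking: there is $d^*>0$ with $\sup_{t\ge0}d_X(t)\le d^*$, and $\lim_{t\to\infty}d_V(t)=0$, where $d_X(t):=\max_{i,j}|x_i(t)-x_j(t)|$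 and $d_V(t):=\max_{i,j}|v_i(t)-v_j(t)|$.
   Context: $\mathbb{N}_0=\{0,1,2,\dots\}$. A solution is a continuous function, $C^1$ on each interval $(t_n,t_{n+1})$, satisfying the system there. *)

theory Defs
  imports "HOL-Analysis.Analysis"
begin

text \<open>Switching function alpha on [0,oo) determined by the switching times t.
  Outside [0,oo) (or outside the covered intervals) the value is irrelevant; we put 1.\<close>
definition switch_alpha :: "(nat \<Rightarrow> real) \<Rightarrow> real \<Rightarrow> real" where
  "switch_alpha t s =
     (if s = 0 then 1
      else if (\<exists>n. t (2*n) < s \<and> s < t (2*n+1)) then 1
      else if (\<exists>n. t (2*n+1) \<le> s \<and> s \<le> t (2*n+2)) then -1
      else 1)"

definition diamX :: "nat \<Rightarrow> (nat \<Rightarrow> real \<Rightarrow> 'a::real_normed_vector) \<Rightarrow> real \<Rightarrow> real" where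
  "diamX N x s = Max {norm (x i s - x j s) | i j. i < N \<and> j < N}"

end

theory Submission
  imports Defs
begin

definition dini_le :: "(real \<Rightarrow> real) \<Rightarrow> real \<Rightarrow> real \<Rightarrow> bool" where
  "dini_le F s c \<longleftrightarrow> (\<forall>e>0. eventually (\<lambda>y. F y \<le> F s + (c+e)*(y-s)) (at_right s))"

lemma dini_mono:
  assumes "dini_le F s c" "c \<le> d" shows "dini_le F s d"
  unfolding dini_le_def
proof (intro allI impI)
  fix e :: real assume e: "e > 0"
  have "eventually (\<lambda>y. F y \<le> F s + (c+e)*(y-s)) (at_right s)"
    using assms(1) e unfolding dini_le_def by blast
  moreover have "eventually (\<lambda>y. s < y) (at_right s)" by (rule eventually_at_right_less)
  ultimately show "eventually (\<lambda>y. F y \<le> F s + (d+e)*(y-s)) (at_right s)"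
  proof eventually_elim
    case (elim y)
    have "(c+e)*(y-s) \<le> (d+e)*(y-s)" using elim assms(2) by (intro mult_right_mono) auto
    then show ?case using elim by linarith
  qed
qed

lemma dini_inf:
  assumes "\<And>e. e > 0 \<Longrightarrow> dini_le F s (c+e)" shows "dini_le F s c"
  unfolding dini_le_def
proof (intro allI impI)
  fix e :: real assume e: "e > 0"
  have "dini_le F s (c + e/2)" using assms e by simp
  then have "eventually (\<lambda>y. F y \<le> F s + ((c+e/2)+e/2)*(y-s)) (at_right s)"
    using e unfolding dini_le_def by (meson half_gt_zero)
  then show "eventually (\<lambda>y. F y \<le> F s + (c+e)*(y-s)) (at_right s)" by (simp add: add.commute)
qed

lemma dini_D0:
  assumes ev: "eventually (\<lambda>y. F y - F s \<le> g y * (y-s)) (at_right s)"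
    and lim: "(g \<longlongrightarrow> c) (at_right s)"
  shows "dini_le F s c"
  unfolding dini_le_def
proof (intro allI impI)
  fix e :: real assume e: "e > 0"
  have "eventually (\<lambda>y. g y < c + e) (at_right s)"
    using lim e by (intro order_tendstoD) auto
  moreover note ev
  moreover have "eventually (\<lambda>y. s < y) (at_right s)" by (rule eventually_at_right_less)
  ultimately show "eventually (\<lambda>y. F y \<le> F s + (c+e)*(y-s)) (at_right s)"
  proof eventually_elim
    case (elim y)
    have "g y * (y-s) \<le> (c+e)*(y-s)" using elim by (intro mult_right_mono) auto
    then show ?case using elim by linarith
  qed
qed

lemma dini_deriv:
  assumes "(F has_real_derivative d) (at s)" shows "dini_le F s d"
proof (rule dini_D0[where g = "\<lambda>y. (F y - F s) / (y - s)"])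
  have "(F has_real_derivative d) (at s within {s<..})"
    using assms by (rule has_field_derivative_at_within)
  then show "((\<lambda>y. (F y - F s) / (y - s)) \<longlongrightarrow> d) (at_right s)"
    by (simp add: has_field_derivative_iff)
  show "eventually (\<lambda>y. F y - F s \<le> (F y - F s) / (y - s) * (y-s)) (at_right s)"
    using eventually_at_right_less[of s] by eventually_elim auto
qed

lemma dini_add:
  assumes "dini_le F s c1" "dini_le G s c2"
  shows "dini_le (\<lambda>y. F y + G y) s (c1 + c2)"
  unfolding dini_le_def
proof (intro allI impI)
  fix e :: real assume e: "e > 0"
  have "eventually (\<lambda>y. F y \<le> F s + (c1+e/2)*(y-s)) (at_right s)"
    using assms(1) e unfolding dini_le_def by simp
  moreover have "eventually (\<lambda>y. G y \<le> G s + (c2+e/2)*(y-s)) (at_right s)"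
    using assms(2) e unfolding dini_le_def by simp
  ultimately show "eventually (\<lambda>y. F y + G y \<le> F s + G s + (c1 + c2 + e)*(y-s)) (at_right s)"
  proof eventually_elim
    case (elim y)
    have "(c1+e/2)*(y-s) + (c2+e/2)*(y-s) = (c1+c2+e)*(y-s)" by (simp add: algebra_simps)
    then show ?case using elim by linarith
  qed
qed

lemma dini_norm:
  fixes a :: "real \<Rightarrow> 'a::real_normed_vector"
  assumes "(a has_vector_derivative a') (at s)"
  shows "dini_le (\<lambda>y. norm (a y)) s (norm a')"
  unfolding dini_le_def
proof (intro allI impI)
  fix e :: real assume e: "e > 0"
  have "(a has_derivative (\<lambda>h. h *\<^sub>R a')) (at s within {s<..})"
    using assms unfolding has_vector_derivative_def by (rule has_derivative_at_withinI)
  then have "((\<lambda>y. norm ((a y - a s) - (y - s) *\<^sub>R a') / norm (y - s)) \<longlongrightarrow> 0) (at_right s)"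
    by (simp add: has_derivative_iff_norm)
  then have "eventually (\<lambda>y. norm ((a y - a s) - (y - s) *\<^sub>R a') / norm (y - s) < e) (at_right s)"
    using e by (intro order_tendstoD) auto
  moreover have "eventually (\<lambda>y. s < y) (at_right s)" by (rule eventually_at_right_less)
  ultimately show "eventually (\<lambda>y. norm (a y) \<le> norm (a s) + (norm a' + e)*(y-s)) (at_right s)"
  proof eventually_elim
    case (elim y)
    then have "norm ((a y - a s) - (y - s) *\<^sub>R a') \<le> e * (y - s)"
      by (simp add: divide_less_eq)
    moreover have "norm (a y) \<le> norm (a s) + norm ((y - s) *\<^sub>R a') + norm ((a y - a s) - (y - s) *\<^sub>R a')"
    proof -
      have "a y = a s + ((y - s) *\<^sub>R a' + ((a y - a s) - (y - s) *\<^sub>R a'))" by simp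
      then have "norm (a y) \<le> norm (a s) + norm ((y - s) *\<^sub>R a' + ((a y - a s) - (y - s) *\<^sub>R a'))"
        by (metis norm_triangle_ineq)
      also have "\<dots> \<le> norm (a s) + (norm ((y - s) *\<^sub>R a') + norm ((a y - a s) - (y - s) *\<^sub>R a'))"
        using norm_triangle_ineq by (intro add_left_mono) 
      finally show ?thesis by simp
    qed
    moreover have "norm ((y - s) *\<^sub>R a') = (y - s) * norm a'" using elim by simp
    ultimately show ?case by (simp add: algebra_simps)
  qed
qed

lemma dini_Max:
  fixes f :: "'i \<Rightarrow> real \<Rightarrow> real"
  assumes fin: "finite I" and ne: "I \<noteq> {}"
    and cont: "\<forall>k\<in>I. (f k \<longlongrightarrow> f k s) (at_right s)"
    and act: "\<forall>k\<in>I. f k s = Max ((\<lambda>k. f k s) ` I) \<longrightarrow> dini_le (f k) s c"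
  shows "dini_le (\<lambda>y. Max ((\<lambda>k. f k y) ` I)) s c"
  unfolding dini_le_def
proof (intro allI impI)
  fix e :: real assume e: "e > 0"
  define M where "M = Max ((\<lambda>k. f k s) ` I)"
  have each: "eventually (\<lambda>y. f k y \<le> M + (c+e)*(y-s)) (at_right s)" if k: "k \<in> I" for k
  proof (cases "f k s = M")
    case True
    then show ?thesis using act k e unfolding dini_le_def M_def by auto
  next
    case False
    have "f k s \<le> M" unfolding M_def using fin k by (intro Max_ge) auto
    with False have lt: "f k s < M" by simp
    have "((\<lambda>y. f k y - (c+e)*(y-s)) \<longlongrightarrow> f k s - (c+e)*(s-s)) (at_right s)"
      using cont k by (intro tendsto_intros) auto
    then have "eventually (\<lambda>y. f k y - (c+e)*(y-s) < M) (at_right s)"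
      using lt by (intro order_tendstoD) auto
    then show ?thesis by eventually_elim simp
  qed
  have "eventually (\<lambda>y. \<forall>k\<in>I. f k y \<le> M + (c+e)*(y-s)) (at_right s)"
    using fin each by (intro eventually_ball_finite) auto
  then show "eventually (\<lambda>y. Max ((\<lambda>k. f k y) ` I) \<le> Max ((\<lambda>k. f k s) ` I) + (c+e)*(y-s)) (at_right s)"
    by eventually_elim (use fin ne in \<open>auto simp: M_def\<close>)
qed

lemma dini_mono_0:
  assumes ab: "a \<le> b" and cont: "continuous_on {a..b} H" and d: "\<forall>s\<in>{a..<b}. dini_le H s 0"
  shows "H b \<le> H a"
proof -
  have key: "H b \<le> H a + e*(b-a)" if e: "e > 0" for e
  proof -
    define S where "S = {a..b} \<inter> (\<lambda>u. H u - H a - e*(u-a)) -` {..0}"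
    have "continuous_on {a..b} (\<lambda>u. H u - H a - e*(u-a))"
      using cont by (intro continuous_intros) auto
    then have cl: "closed S" unfolding S_def by (intro continuous_closed_preimage) auto
    have aS: "a \<in> S" using ab unfolding S_def by auto
    have bdd: "bdd_above S" unfolding S_def by (rule bdd_aboveI[of _ b]) auto
    define \<sigma> where "\<sigma> = Sup S"
    have sS: "\<sigma> \<in> S" unfolding \<sigma>_def using cl aS bdd closed_contains_Sup by blast
    have "\<sigma> = b"
    proof (rule ccontr)
      assume "\<sigma> \<noteq> b"
      with sS have sb: "\<sigma> < b" "a \<le> \<sigma>" unfolding S_def by auto
      have "eventually (\<lambda>y. H y \<le> H \<sigma> + (0+e)*(y-\<sigma>)) (at_right \<sigma>)"
        using d sb e unfolding dini_le_def by auto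
      moreover have "eventually (\<lambda>y. y \<in> {\<sigma><..<b}) (at_right \<sigma>)"
        using sb by (intro eventually_at_right_real)
      ultimately have "eventually (\<lambda>y. H y \<le> H \<sigma> + e*(y-\<sigma>) \<and> y \<in> {\<sigma><..<b}) (at_right \<sigma>)"
        by eventually_elim auto
      then obtain y where y: "H y \<le> H \<sigma> + e*(y-\<sigma>)" "\<sigma> < y" "y < b"
        using eventually_happens'[OF trivial_limit_at_right_real] by fastforce
      have "H \<sigma> \<le> H a + e*(\<sigma>-a)" using sS unfolding S_def by auto
      then have "y \<in> S" using y sb unfolding S_def by (auto simp: algebra_simps)
      then have "y \<le> \<sigma>" unfolding \<sigma>_def using bdd by (rule cSup_upper)
      with y show False by simp
    qed
    with sS show ?thesis unfolding S_def by auto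
  qed
  show ?thesis
  proof (cases "a = b")
    case True then show ?thesis by simp
  next
    case False
    with ab have ab': "b - a > 0" by simp
    show ?thesis
    proof (rule field_le_epsilon)
      fix e :: real assume "e > 0"
      then have "H b \<le> H a + (e/(b-a))*(b-a)" using ab' by (intro key) auto
      then show "H b \<le> H a + e" using ab' by simp
    qed
  qed
qed

lemma dini_mono_open:
  assumes ab: "a \<le> b" and cont: "continuous_on {a..b} H" and d: "\<forall>s\<in>{a<..<b}. dini_le H s 0"
  shows "H b \<le> H a"
proof (cases "a = b")
  case True then show ?thesis by simp
next
  case False
  with ab have ab': "a < b" by simp
  have ev: "eventually (\<lambda>y. H b \<le> H y) (at_right a)"
  proof -
    have "eventually (\<lambda>y. y \<in> {a<..<b}) (at_right a)" using ab' by (rule eventually_at_right_real)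
    then show ?thesis
    proof eventually_elim
      case (elim y)
      show ?case
        by (rule dini_mono_0) (use elim cont d in \<open>auto intro: continuous_on_subset\<close>)
    qed
  qed
  have "(H \<longlongrightarrow> H a) (at a within {a..b})"
    using cont ab by (simp add: continuous_on_def)
  moreover have "at a within {a..b} = at a within {a..}"
    by (rule at_within_nhd[of _ "{..<b}"]) (use ab' in auto)
  ultimately have "(H \<longlongrightarrow> H a) (at_right a)" by (simp add: at_within_Ici_at_right)
  then show ?thesis using ev by (rule tendsto_lowerbound) simp
qed

lemma dini_exp_mult:
  assumes d: "dini_le F s d"
  shows "dini_le (\<lambda>y. exp (- c * y) * F y) s (exp (- c * s) * d - c * exp (- c * s) * F s)"
proof (rule dini_inf)
  fix \<eta> :: real assume \<eta>: "\<eta> > 0"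
  define \<epsilon> where "\<epsilon> = \<eta> / exp (- c * s)"
  have \<epsilon>: "\<epsilon> > 0" unfolding \<epsilon>_def using \<eta> by simp
  define g where "g y = exp (- c * y) * (d + \<epsilon>) + F s * ((exp (- c * y) - exp (- c * s)) / (y - s))" for y
  have dexp: "((\<lambda>y. exp (- c * y)) has_real_derivative (- c * exp (- c * s))) (at s within {s<..})"
    by (auto intro!: derivative_eq_intros)
  have "((\<lambda>y. (exp (- c * y) - exp (- c * s)) / (y - s)) \<longlongrightarrow> - c * exp (- c * s)) (at_right s)"
    using dexp by (simp add: has_field_derivative_iff)
  then have "(g \<longlongrightarrow> exp (- c * s) * (d + \<epsilon>) + F s * (- c * exp (- c * s))) (at_right s)"
    unfolding g_def by (intro tendsto_intros) auto
  moreover have eq: "exp (- c * s) * (d + \<epsilon>) + F s * (- c * exp (- c * s)) = exp (- c * s) * d - c * exp (- c * s) * F s + \<eta>"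
    unfolding \<epsilon>_def by (simp add: algebra_simps)
  ultimately have lim: "(g \<longlongrightarrow> exp (- c * s) * d - c * exp (- c * s) * F s + \<eta>) (at_right s)" by (simp only: eq)
  have ev0: "eventually (\<lambda>y. F y \<le> F s + (d+\<epsilon>)*(y-s)) (at_right s)"
    using d \<epsilon> unfolding dini_le_def by auto
  have "eventually (\<lambda>y. exp (- c * y) * F y - exp (- c * s) * F s \<le> g y * (y - s)) (at_right s)"
    using ev0 eventually_at_right_less[of s]
  proof eventually_elim
    case (elim y)
    have "exp (- c * y) * (F y - F s) \<le> exp (- c * y) * ((d+\<epsilon>)*(y-s))"
      using elim by (intro mult_left_mono) auto
    moreover have "g y * (y - s) = exp (- c * y) * ((d+\<epsilon>)*(y-s)) + F s * (exp (- c * y) - exp (- c * s))"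
      unfolding g_def using elim by (simp add: field_simps)
    ultimately show ?case by (simp add: algebra_simps)
  qed
  then show "dini_le (\<lambda>y. exp (- c * y) * F y) s (exp (- c * s) * d - c * exp (- c * s) * F s + \<eta>)"
    using lim by (rule dini_D0)
qed

lemma gronwall_dini:
  assumes ab: "a \<le> b" and cont: "continuous_on {a..b} F"
    and d: "\<forall>s\<in>{a<..<b}. dini_le F s (c * F s)"
  shows "F b \<le> F a * exp (c * (b - a))"
proof -
  have "exp (- c * b) * F b \<le> exp (- c * a) * F a"
  proof (rule dini_mono_open[OF ab, where H = "\<lambda>y. exp (- c * y) * F y"])
    show "continuous_on {a..b} (\<lambda>y. exp (- c * y) * F y)"
      using cont by (intro continuous_intros) auto
    show "\<forall>s\<in>{a<..<b}. dini_le (\<lambda>y. exp (- c * y) * F y) s 0"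
    proof
      fix s assume "s \<in> {a<..<b}"
      then have "dini_le (\<lambda>y. exp (- c * y) * F y) s (exp (- c * s) * (c * F s) - c * exp (- c * s) * F s)"
        using d by (intro dini_exp_mult) auto
      then show "dini_le (\<lambda>y. exp (- c * y) * F y) s 0" by (simp add: algebra_simps)
    qed
  qed
  then have A: "exp (c * b) * (exp (- c * b) * F b) \<le> exp (c * b) * (exp (- c * a) * F a)"
    by (intro mult_left_mono) auto
  have B: "exp (c * b) * (exp (- c * b) * F b) = F b"
    by (simp add: mult.assoc[symmetric] mult_exp_exp)
  have "F b \<le> exp (c * b) * (exp (- c * a) * F a)" using A B by linarith
  then have "F b \<le> F a * exp (c * b) * exp (- c * a)" by (simp add: ac_simps)
  also have "F a * exp (c * b) * exp (- c * a) = F a * exp (c * (b - a))"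
    by (simp add: mult.assoc mult_exp_exp algebra_simps)
  finally show ?thesis .
qed

lemma lin_dini:
  assumes ab: "a \<le> b" and cont: "continuous_on {a..b} F"
    and d: "\<forall>s\<in>{a<..<b}. dini_le F s (g s) \<and> g s \<le> B"
  shows "F b \<le> F a + B * (b - a)"
proof -
  have "F b + (- B) * b \<le> F a + (- B) * a"
  proof (rule dini_mono_open[OF ab, where H = "\<lambda>y. F y + (- B) * y"])
    show "continuous_on {a..b} (\<lambda>y. F y + (- B) * y)"
      using cont by (intro continuous_intros) auto
    show "\<forall>s\<in>{a<..<b}. dini_le (\<lambda>y. F y + (- B) * y) s 0"
    proof
      fix s assume s: "s \<in> {a<..<b}"
      have "dini_le (\<lambda>y. (- B) * y) s (- B)"
        by (rule dini_deriv) (auto intro!: derivative_eq_intros)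
      then have "dini_le (\<lambda>y. F y + (- B) * y) s (g s + - B)"
        using d s by (intro dini_add) auto
      then show "dini_le (\<lambda>y. F y + (- B) * y) s 0"
        by (rule dini_mono) (use d s in auto)
    qed
  qed
  then show ?thesis by (simp add: algebra_simps)
qed

lemma dini_comp:
  assumes Phi: "\<And>x y. 0 \<le> x \<Longrightarrow> x \<le> y \<Longrightarrow> \<Phi> y - \<Phi> x \<le> \<phi> x * (y - x) \<and> \<Phi> x \<le> \<Phi> y"
    and p0: "\<phi> (G s) \<ge> 0"
    and d: "dini_le G s c" and c0: "c \<ge> 0" and G0: "\<And>y. G y \<ge> 0"
  shows "dini_le (\<lambda>y. \<Phi> (G y)) s (\<phi> (G s) * c)"
  unfolding dini_le_def
proof (intro allI impI)
  fix e :: real assume e: "e > 0"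
  define p where "p = \<phi> (G s)"
  define e' where "e' = e / (p + 1)"
  have e': "e' > 0" "p * e' \<le> e" using e p0 unfolding e'_def p_def by (auto simp: field_simps)
  have "eventually (\<lambda>y. G y \<le> G s + (c+e')*(y-s)) (at_right s)"
    using d e' unfolding dini_le_def by auto
  then show "eventually (\<lambda>y. \<Phi> (G y) \<le> \<Phi> (G s) + (\<phi> (G s) * c + e)*(y-s)) (at_right s)"
    using eventually_at_right_less[of s]
  proof eventually_elim
    case (elim y)
    have nn: "(\<phi> (G s) * c + e)*(y-s) \<ge> 0" using p0 c0 e elim by auto
    show ?case
    proof (cases "G s \<le> G y")
      case True
      have "\<Phi> (G y) - \<Phi> (G s) \<le> p * (G y - G s)" using Phi[OF G0 True] unfolding p_def by auto
      also have "\<dots> \<le> p * ((c+e')*(y-s))" using elim p0 unfolding p_def by (intro mult_left_mono) auto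
      also have "\<dots> = (p * c + p * e') * (y - s)" by (simp add: algebra_simps)
      also have "\<dots> \<le> (p * c + e) * (y - s)" using e' elim by (intro mult_right_mono) auto
      finally show ?thesis unfolding p_def by simp
    next
      case False
      then have "\<Phi> (G y) \<le> \<Phi> (G s)" using Phi[of "G y" "G s"] G0[of y] by auto
      then show ?thesis using nn by simp
    qed
  qed
qed

lemma dini_norm_nz:
  fixes a :: "real \<Rightarrow> 'a::real_inner"
  assumes d: "(a has_vector_derivative a') (at s)" and nz: "a s \<noteq> 0"
  shows "dini_le (\<lambda>y. norm (a y)) s ((a s \<bullet> a') / norm (a s))"
proof (rule dini_deriv)
  have d1: "(a has_derivative (\<lambda>h. h *\<^sub>R a')) (at s)" using d by (simp add: has_vector_derivative_def)
  have "((\<lambda>y. norm (a y)) has_derivative (\<lambda>h. (h *\<^sub>R a') \<bullet> sgn (a s))) (at s)"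
    using has_derivative_compose[OF d1 has_derivative_norm[OF nz]] by (simp add: o_def)
  then show "((\<lambda>y. norm (a y)) has_real_derivative ((a s \<bullet> a') / norm (a s))) (at s)"
    unfolding has_field_derivative_def
    by (rule has_derivative_eq_rhs) (auto simp: fun_eq_iff sgn_div_norm inner_commute divide_inverse mult_ac)
qed

definition phimin :: "(real \<Rightarrow> real) \<Rightarrow> real \<Rightarrow> real" where
  "phimin \<psi> r = Inf (\<psi> ` {0..max 0 r})"

definition Phi :: "(real \<Rightarrow> real) \<Rightarrow> real \<Rightarrow> real" where
  "Phi \<psi> r = integral {0..r} (phimin \<psi>)"

locale psi_loc =
  fixes \<psi> :: "real \<Rightarrow> real"
  assumes pos: "\<And>r. \<psi> r > 0" and cont: "continuous_on UNIV \<psi>"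
begin

lemma bdd_below_psi: "bdd_below (\<psi> ` A)"
  using pos by (intro bdd_belowI[of _ 0]) (auto intro: less_imp_le)

lemma phimin_attained: "\<exists>y\<in>{0..max 0 r}. phimin \<psi> r = \<psi> y"
proof -
  have "continuous_on {0..max 0 r} \<psi>" using cont continuous_on_subset by blast
  then obtain y where y: "y \<in> {0..max 0 r}" "\<forall>z\<in>{0..max 0 r}. \<psi> y \<le> \<psi> z"
    using continuous_attains_inf[of "{0..max 0 r}" \<psi>] by auto
  have "Inf (\<psi> ` {0..max 0 r}) = \<psi> y"
    using y by (intro cInf_eq_minimum) auto
  then show ?thesis using y unfolding phimin_def by auto
qed

lemma phimin_pos: "phimin \<psi> r > 0"
  using phimin_attained[of r] pos by auto

lemma phimin_le: "0 \<le> y \<Longrightarrow> y \<le> r \<Longrightarrow> phimin \<psi> r \<le> \<psi> y"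
  unfolding phimin_def by (rule cInf_lower) (auto intro: bdd_below_psi)

lemma phimin_le0: "phimin \<psi> r \<le> \<psi> 0"
  unfolding phimin_def by (rule cInf_lower) (auto intro: bdd_below_psi)

lemma phimin_anti: "r1 \<le> r2 \<Longrightarrow> phimin \<psi> r2 \<le> phimin \<psi> r1"
  unfolding phimin_def by (rule cInf_superset_mono) (auto intro: bdd_below_psi)

lemma mono_neg_phimin: "mono (\<lambda>r. - phimin \<psi> r)"
  by (auto intro!: monoI phimin_anti)

lemma phimin_integrable: "phimin \<psi> integrable_on {a..b}"
proof -
  have "(\<lambda>r. - phimin \<psi> r) integrable_on {a..b}"
    using mono_neg_phimin by (intro integrable_on_mono_on) (auto simp: mono_def mono_on_def)
  then have "(\<lambda>r. - (- phimin \<psi> r)) integrable_on {a..b}" by (rule integrable_neg)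
  then show ?thesis by simp
qed

lemma Phi_diff: "0 \<le> x \<Longrightarrow> x \<le> y \<Longrightarrow> Phi \<psi> y - Phi \<psi> x = integral {x..y} (phimin \<psi>)"
  unfolding Phi_def using Henstock_Kurzweil_Integration.integral_combine[where a=0 and c=x and b=y and f="phimin \<psi>"] phimin_integrable by auto

lemma Phi_props:
  assumes "0 \<le> x" "x \<le> y"
  shows "Phi \<psi> y - Phi \<psi> x \<le> phimin \<psi> x * (y - x) \<and> Phi \<psi> x \<le> Phi \<psi> y"
proof
  have "integral {x..y} (phimin \<psi>) \<le> integral {x..y} (\<lambda>_. phimin \<psi> x)"
    by (rule integral_le) (auto intro: phimin_integrable phimin_anti)
  then show "Phi \<psi> y - Phi \<psi> x \<le> phimin \<psi> x * (y - x)"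
    using assms by (simp add: Phi_diff mult.commute)
  have "0 \<le> integral {x..y} (phimin \<psi>)"
    by (rule integral_nonneg) (auto intro: phimin_integrable less_imp_le phimin_pos)
  then show "Phi \<psi> x \<le> Phi \<psi> y" using assms Phi_diff by force
qed

lemma Phi_lip:
  assumes "0 \<le> x" "x \<le> y" shows "\<bar>Phi \<psi> y - Phi \<psi> x\<bar> \<le> \<psi> 0 * (y - x)"
proof -
  have "phimin \<psi> x * (y - x) \<le> \<psi> 0 * (y - x)"
    using assms phimin_le0 by (intro mult_right_mono) auto
  then show ?thesis using Phi_props[OF assms] by auto
qed

lemma Phi_cont: "continuous_on {0..} (Phi \<psi>)"
proof (rule lipschitz_on_continuous_on)
  show "(\<psi> 0)-lipschitz_on {0..} (Phi \<psi>)"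
  proof (rule lipschitz_onI)
    fix x y :: real assume xy: "x \<in> {0..}" "y \<in> {0..}"
    show "dist (Phi \<psi> x) (Phi \<psi> y) \<le> \<psi> 0 * dist x y"
    proof (cases "x \<le> y")
      case True then show ?thesis using Phi_lip[of x y] xy by (simp add: dist_real_def abs_minus_commute)
    next
      case False then show ?thesis using Phi_lip[of y x] xy by (simp add: dist_real_def)
    qed
  next
    show "0 \<le> \<psi> 0" using pos[of 0] by simp
  qed
qed

lemma Phi_unbounded:
  assumes int: "(\<integral>\<^sup>+ y\<in>{0..}. ennreal (Inf (\<psi> ` {0..y})) \<partial>lborel) = \<infinity>"
  shows "\<exists>R\<ge>0. Phi \<psi> R > B"
proof (rule ccontr)
  assume "\<not> ?thesis"
  then have bd: "\<And>R. R \<ge> 0 \<Longrightarrow> Phi \<psi> R \<le> B" by (auto simp: not_less)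
  define f where "f n y = ennreal (phimin \<psi> y) * indicator {0..real n} y" for n :: nat and y :: real
  have meas_phi: "(\<lambda>y. phimin \<psi> y) \<in> borel_measurable borel"
  proof -
    have "(\<lambda>y. - phimin \<psi> y) \<in> borel_measurable borel"
      using mono_neg_phimin by (rule borel_measurable_mono)
    then have "(\<lambda>y. - (- phimin \<psi> y)) \<in> borel_measurable borel" by measurable
    then show ?thesis by simp
  qed
  have meas: "f n \<in> borel_measurable lborel" for n
    unfolding f_def using meas_phi by measurable
  have inc: "incseq f"
    unfolding f_def by (auto intro!: incseq_SucI le_funI mult_left_mono simp: indicator_def)
  have sup: "(SUP n. f n y) = ennreal (Inf (\<psi> ` {0..y})) * indicator {0..} y" for y
  proof (cases "y \<ge> 0")
    case True
    obtain m :: nat where m: "y \<le> real m" using real_arch_simple by blast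
    have "(SUP n. f n y) = f m y"
    proof (rule antisym)
      show "(SUP n. f n y) \<le> f m y"
      proof (rule SUP_least)
        fix n show "f n y \<le> f m y" unfolding f_def using True m by (auto simp: indicator_def)
      qed
      show "f m y \<le> (SUP n. f n y)" by (rule SUP_upper) auto
    qed
    then show ?thesis using True m by (simp add: f_def phimin_def)
  next
    case False then show ?thesis by (simp add: f_def)
  qed
  have "(\<integral>\<^sup>+ y\<in>{0..}. ennreal (Inf (\<psi> ` {0..y})) \<partial>lborel) = (\<integral>\<^sup>+ y. (SUP n. f n y) \<partial>lborel)"
    by (simp add: sup)
  also have "\<dots> = (SUP n. integral\<^sup>N lborel (f n))"
    using inc meas by (rule nn_integral_monotone_convergence_SUP)
  also have "\<dots> \<le> ennreal B"
  proof (rule SUP_least)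
    fix n
    have "(phimin \<psi> has_integral Phi \<psi> (real n)) {0..real n}"
      unfolding Phi_def using phimin_integrable by (rule integrable_integral)
    then have "integral\<^sup>N lborel (\<lambda>x. indicator {0..real n} x * phimin \<psi> x) = ennreal (Phi \<psi> (real n))"
      by (intro nn_integral_has_integral_lebesgue) (auto intro: less_imp_le phimin_pos)
    moreover have "integral\<^sup>N lborel (f n) = integral\<^sup>N lborel (\<lambda>x. indicator {0..real n} x * phimin \<psi> x)"
      unfolding f_def by (intro nn_integral_cong) (auto simp: indicator_def)
    ultimately show "integral\<^sup>N lborel (f n) \<le> ennreal B"
      using bd[of "real n"] by (simp add: ennreal_leI)
  qed
  finally have "(\<integral>\<^sup>+ y\<in>{0..}. ennreal (Inf (\<psi> ` {0..y})) \<partial>lborel) \<le> ennreal B" .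
  then show False using int by (simp add: top_unique)
qed

end

lemma active_ineq:
  fixes w :: "nat \<Rightarrow> 'a::real_inner" and ps :: "nat \<Rightarrow> nat \<Rightarrow> real"
  assumes N2: "N \<ge> 2" and ij: "i < N" "j < N"
    and maxd: "\<forall>k<N. \<forall>l<N. norm (w k - w l) \<le> norm (w i - w j)"
    and ps_ge: "\<forall>k<N. \<forall>l<N. ps k l \<ge> c" and c0: "c \<ge> 0"
  shows "(w i - w j) \<bullet> ((1 / (real N - 1)) *\<^sub>R (\<Sum>k\<in>{..<N}-{i}. ps i k *\<^sub>R (w k - w i))
            - (1 / (real N - 1)) *\<^sub>R (\<Sum>k\<in>{..<N}-{j}. ps j k *\<^sub>R (w k - w j)))
         \<le> - c * (norm (w i - w j))\<^sup>2"
proof -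
  define a where "a = w i - w j"
  define m where "m = real N - 1"
  have m: "m > 0" "m \<le> real N" using N2 unfolding m_def by auto
  have neg: "a \<bullet> (w k - w i) \<le> 0" if k: "k < N" for k
  proof -
    have "a \<bullet> (w k - w i) = a \<bullet> (w k - w j) - a \<bullet> a" unfolding a_def by (simp add: algebra_simps)
    also have "\<dots> \<le> norm a * norm (w k - w j) - norm a * norm a"
      using norm_cauchy_schwarz[of a "w k - w j"] by (simp add: dot_square_norm power2_eq_square)
    also have "\<dots> \<le> 0"
      using maxd k ij unfolding a_def by (simp add: mult_left_mono)
    finally show ?thesis .
  qed
  have pos: "a \<bullet> (w k - w j) \<ge> 0" if k: "k < N" for k
  proof -
    define b where "b = w k - w j"
    have "norm (b - a) \<le> norm a" using maxd k ij unfolding a_def b_def by simp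
    then have "(norm (b - a))\<^sup>2 \<le> (norm a)\<^sup>2" by (simp add: power_mono)
    then have "(b - a) \<bullet> (b - a) \<le> a \<bullet> a" by (simp add: power2_norm_eq_inner)
    then have "b \<bullet> b - 2 * (a \<bullet> b) \<le> 0" by (simp add: algebra_simps inner_commute)
    moreover have "b \<bullet> b \<ge> 0" by simp
    ultimately show ?thesis unfolding b_def by linarith
  qed
  have S1: "a \<bullet> (\<Sum>k\<in>{..<N}-{i}. ps i k *\<^sub>R (w k - w i)) \<le> c * (\<Sum>k\<in>{..<N}. a \<bullet> (w k - w i))"
  proof -
    have "a \<bullet> (\<Sum>k\<in>{..<N}-{i}. ps i k *\<^sub>R (w k - w i)) = (\<Sum>k\<in>{..<N}-{i}. ps i k * (a \<bullet> (w k - w i)))"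
      by (simp add: inner_sum_right)
    also have "\<dots> \<le> (\<Sum>k\<in>{..<N}-{i}. c * (a \<bullet> (w k - w i)))"
      by (rule sum_mono) (use ps_ge neg ij in \<open>auto intro: mult_right_mono_neg\<close>)
    also have "\<dots> = c * (\<Sum>k\<in>{..<N}-{i}. a \<bullet> (w k - w i))" by (simp add: sum_distrib_left)
    also have "(\<Sum>k\<in>{..<N}-{i}. a \<bullet> (w k - w i)) = (\<Sum>k\<in>{..<N}. a \<bullet> (w k - w i))"
      using ij by (simp add: sum_diff1)
    finally show ?thesis .
  qed
  have S2: "a \<bullet> (\<Sum>k\<in>{..<N}-{j}. ps j k *\<^sub>R (w k - w j)) \<ge> c * (\<Sum>k\<in>{..<N}. a \<bullet> (w k - w j))"
  proof -
    have "(\<Sum>k\<in>{..<N}. a \<bullet> (w k - w j)) = (\<Sum>k\<in>{..<N}-{j}. a \<bullet> (w k - w j))"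
      using ij by (simp add: sum_diff1)
    then have "c * (\<Sum>k\<in>{..<N}. a \<bullet> (w k - w j)) = (\<Sum>k\<in>{..<N}-{j}. c * (a \<bullet> (w k - w j)))"
      by (simp add: sum_distrib_left)
    also have "\<dots> \<le> (\<Sum>k\<in>{..<N}-{j}. ps j k * (a \<bullet> (w k - w j)))"
      by (rule sum_mono) (use ps_ge pos ij in \<open>auto intro: mult_right_mono\<close>)
    also have "\<dots> = a \<bullet> (\<Sum>k\<in>{..<N}-{j}. ps j k *\<^sub>R (w k - w j))"
      by (simp add: inner_sum_right)
    finally show ?thesis .
  qed
  have D: "(\<Sum>k\<in>{..<N}. a \<bullet> (w k - w i)) - (\<Sum>k\<in>{..<N}. a \<bullet> (w k - w j)) = - real N * (a \<bullet> a)"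
  proof -
    have "(\<Sum>k\<in>{..<N}. a \<bullet> (w k - w i)) - (\<Sum>k\<in>{..<N}. a \<bullet> (w k - w j))
        = (\<Sum>k\<in>{..<N}. a \<bullet> (w k - w i) - a \<bullet> (w k - w j))" by (simp add: sum_subtractf)
    also have "\<dots> = (\<Sum>k\<in>{..<N}. - (a \<bullet> a))"
      by (rule sum.cong) (auto simp: a_def algebra_simps)
    finally show ?thesis by simp
  qed
  have aa: "a \<bullet> a = (norm a)\<^sup>2" by (simp add: power2_norm_eq_inner)
  have "a \<bullet> ((1 / m) *\<^sub>R (\<Sum>k\<in>{..<N}-{i}. ps i k *\<^sub>R (w k - w i))
            - (1 / m) *\<^sub>R (\<Sum>k\<in>{..<N}-{j}. ps j k *\<^sub>R (w k - w j)))
      = (1 / m) * (a \<bullet> (\<Sum>k\<in>{..<N}-{i}. ps i k *\<^sub>R (w k - w i)) - a \<bullet> (\<Sum>k\<in>{..<N}-{j}. ps j k *\<^sub>R (w k - w j)))"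
    by (simp add: inner_diff_right algebra_simps)
  also have "\<dots> \<le> (1 / m) * (c * (- real N * (a \<bullet> a)))"
  proof (rule mult_left_mono)
    have "c * (\<Sum>k\<in>{..<N}. a \<bullet> (w k - w i)) - c * (\<Sum>k\<in>{..<N}. a \<bullet> (w k - w j)) = c * (- real N * (a \<bullet> a))"
      using D by (metis right_diff_distrib)
    then show "a \<bullet> (\<Sum>k\<in>{..<N}-{i}. ps i k *\<^sub>R (w k - w i)) - a \<bullet> (\<Sum>k\<in>{..<N}-{j}. ps j k *\<^sub>R (w k - w j)) \<le> c * (- real N * (a \<bullet> a))"
      using S1 S2 by linarith
    show "0 \<le> 1 / m" using m by simp
  qed
  also have "\<dots> \<le> - c * (a \<bullet> a)"
  proof -
    have "c * (a \<bullet> a) * m \<le> c * (a \<bullet> a) * real N" using m c0 by (intro mult_left_mono) auto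
    then show ?thesis using m by (simp add: field_simps)
  qed
  finally show ?thesis unfolding m_def a_def[symmetric] aa .
qed

lemma cont_Max:
  fixes f :: "'i \<Rightarrow> real \<Rightarrow> real"
  assumes "finite I" "I \<noteq> {}" "\<forall>k\<in>I. continuous_on S (f k)"
  shows "continuous_on S (\<lambda>s. Max ((\<lambda>k. f k s) ` I))"
  using assms
proof (induction I rule: finite_ne_induct)
  case (singleton x) then show ?case by simp
next
  case (insert x F)
  have "continuous_on S (\<lambda>s. max (f x s) (Max ((\<lambda>k. f k s) ` F)))"
    using insert by (intro continuous_on_max) auto
  then show ?case using insert by simp
qed

locale flock = psi_loc \<psi> for \<psi> :: "real \<Rightarrow> real" +
  fixes N :: nat and K :: real and t :: "nat \<Rightarrow> real"
    and x v :: "nat \<Rightarrow> real \<Rightarrow> real ^ 'd"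
  assumes N2: "N \<ge> 2"
    and psi_bdd: "bounded (range \<psi>)"
    and K_def: "K = (SUP r. \<psi> r)"
    and psi_int: "(\<integral>\<^sup>+ y\<in>{0..}. ennreal (Inf (\<psi> ` {0..y})) \<partial>lborel) = \<infinity>"
    and t_mono: "strict_mono t"
    and t0: "t 0 = 0"
    and t_lim: "filterlim t at_top sequentially"
    and gap_neg: "\<forall>n. t (2*n+2) - t (2*n+1) < ln 2 / K"
    and gap_pos: "\<forall>n. t (2*n+1) - t (2*n) > 1 / K"
    and sum_fin: "summable (\<lambda>p. ln (exp (K * (t (2*p+2) - t (2*p+1)))
                                    / (2 - exp (K * (t (2*p+2) - t (2*p+1))))))"
    and x_cont: "\<forall>i<N. continuous_on {0..} (x i)"
    and v_cont: "\<forall>i<N. continuous_on {0..} (v i)"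
    and x_ode: "\<forall>i<N. \<forall>n. \<forall>s\<in>{t n<..<t (Suc n)}.
                  (x i has_vector_derivative v i s) (at s)"
    and v_ode: "\<forall>i<N. \<forall>n. \<forall>s\<in>{t n<..<t (Suc n)}.
                  (v i has_vector_derivative
                     ((1 / (real N - 1)) *\<^sub>R
                       (\<Sum>j\<in>{..<N} - {i}. (switch_alpha t s * \<psi> (norm (x i s - x j s)))
                                             *\<^sub>R (v j s - v i s)))) (at s)"
begin

definition "P = {..<N} \<times> {..<N}"

definition vd :: "nat \<Rightarrow> real \<Rightarrow> real ^ 'd" where
  "vd i s = (1 / (real N - 1)) *\<^sub>R
     (\<Sum>j\<in>{..<N} - {i}. (switch_alpha t s * \<psi> (norm (x i s - x j s))) *\<^sub>R (v j s - v i s))"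

abbreviation "DX s \<equiv> diamX N x s"
abbreviation "DV s \<equiv> diamX N v s"
abbreviation "\<phi> \<equiv> phimin \<psi>"

lemma P_fin: "finite P"
  unfolding P_def by auto

lemma P_ne: "P \<noteq> {}"
proof -
  have "(0,0) \<in> P" using N2 unfolding P_def by auto
  then show ?thesis by blast
qed

lemma diam_eq: "diamX N y s = Max ((\<lambda>p. norm (y (fst p) s - y (snd p) s)) ` P)"
proof -
  have "{norm (y i s - y j s) | i j. i < N \<and> j < N} = (\<lambda>p. norm (y (fst p) s - y (snd p) s)) ` P"
  proof (intro set_eqI iffI)
    fix z assume "z \<in> {norm (y i s - y j s) | i j. i < N \<and> j < N}"
    then obtain i j where "z = norm (y i s - y j s)" "i < N" "j < N" by blast
    then show "z \<in> (\<lambda>p. norm (y (fst p) s - y (snd p) s)) ` P"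
      unfolding P_def by (intro image_eqI[where x = "(i,j)"]) auto
  next
    fix z assume "z \<in> (\<lambda>p. norm (y (fst p) s - y (snd p) s)) ` P"
    then obtain p where "p \<in> P" "z = norm (y (fst p) s - y (snd p) s)" by blast
    then show "z \<in> {norm (y i s - y j s) | i j. i < N \<and> j < N}" unfolding P_def by (auto; blast)
  qed
  then show ?thesis unfolding diamX_def by simp
qed

lemma diam_ge: "i < N \<Longrightarrow> j < N \<Longrightarrow> norm (y i s - y j s) \<le> diamX N y s"
  unfolding diam_eq using P_fin by (intro Max_ge) (auto simp: P_def image_iff intro!: bexI[of _ "(i,j)"])

lemma diam_nonneg: "0 \<le> diamX N y s"
  using diam_ge[of 0 0 y s] N2 by simp

lemma diam_attained: "\<exists>p\<in>P. diamX N y s = norm (y (fst p) s - y (snd p) s)"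
proof -
  have "Max ((\<lambda>p. norm (y (fst p) s - y (snd p) s)) ` P) \<in> (\<lambda>p. norm (y (fst p) s - y (snd p) s)) ` P"
    using P_fin P_ne by (intro Max_in) auto
  then show ?thesis unfolding diam_eq by blast
qed

lemma diam_cont:
  assumes "\<forall>i<N. continuous_on {0..} (y i)"
  shows "continuous_on {0..} (\<lambda>s. diamX N y s)"
  unfolding diam_eq
  by (rule cont_Max[OF P_fin P_ne]) (use assms in \<open>auto simp: P_def intro!: continuous_intros\<close>)

lemma psi_le_K: "\<psi> r \<le> K"
proof -
  have "bdd_above (range \<psi>)" using psi_bdd by (rule bounded_imp_bdd_above)
  then show ?thesis unfolding K_def by (intro cSUP_upper) auto
qed

lemma K_pos: "K > 0" using psi_le_K[of 0] pos[of 0] by simp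

lemma t_less: "m < n \<Longrightarrow> t m < t n" using t_mono by (simp add: strict_mono_less)
lemma t_le: "m \<le> n \<Longrightarrow> t m \<le> t n" using t_mono by (simp add: strict_mono_less_eq)
lemma t_nonneg: "0 \<le> t n" using t_le[of 0 n] t0 by simp

lemma t_cover:
  assumes "0 \<le> s" shows "\<exists>m. t m \<le> s \<and> s < t (Suc m)"
proof -
  have "eventually (\<lambda>n. t n > s) sequentially"
    using t_lim by (simp add: filterlim_at_top_dense)
  then obtain n where n: "t n > s" by (auto simp: eventually_sequentially)
  define n0 where "n0 = (LEAST n. s < t n)"
  have n0: "s < t n0" unfolding n0_def using n by (rule LeastI)
  have "n0 \<noteq> 0"
  proof
    assume "n0 = 0" with n0 t0 assms show False by simp
  qed
  then obtain m where m: "n0 = Suc m" by (cases n0) auto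
  have "\<not> s < t m" unfolding n0_def using m n0_def not_less_Least[of m "\<lambda>n. s < t n"] by simp
  then show ?thesis using n0 m by (intro exI[of _ m]) (auto simp: not_less)
qed

lemma alpha_pos: "t (2*n) < s \<Longrightarrow> s < t (2*n+1) \<Longrightarrow> switch_alpha t s = 1"
  using t_nonneg[of "2*n"] unfolding switch_alpha_def by auto

lemma alpha_abs: "\<bar>switch_alpha t s\<bar> = 1"
  unfolding switch_alpha_def by auto

lemma vd_bound:
  assumes i: "i < N" shows "norm (vd i s) \<le> K * DV s"
proof -
  have "norm (\<Sum>j\<in>{..<N} - {i}. (switch_alpha t s * \<psi> (norm (x i s - x j s))) *\<^sub>R (v j s - v i s))
        \<le> (\<Sum>j\<in>{..<N} - {i}. K * DV s)"
  proof (rule sum_norm_le)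
    fix j assume j: "j \<in> {..<N} - {i}"
    have "norm ((switch_alpha t s * \<psi> (norm (x i s - x j s))) *\<^sub>R (v j s - v i s))
          = \<psi> (norm (x i s - x j s)) * norm (v j s - v i s)"
      using pos alpha_abs by (simp add: abs_mult less_imp_le)
    also have "\<dots> \<le> K * DV s"
      using j i by (intro mult_mono psi_le_K diam_ge) (auto intro: less_imp_le pos K_pos)
    finally show "norm ((switch_alpha t s * \<psi> (norm (x i s - x j s))) *\<^sub>R (v j s - v i s)) \<le> K * DV s" .
  qed
  also have "\<dots> = (real N - 1) * (K * DV s)"
    using i N2 by (simp add: card_Diff_singleton of_nat_diff)
  finally have A: "norm (\<Sum>j\<in>{..<N} - {i}. (switch_alpha t s * \<psi> (norm (x i s - x j s))) *\<^sub>R (v j s - v i s))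
        \<le> (real N - 1) * (K * DV s)" .
  have N1: "real N - 1 > 0" using N2 by simp
  have "norm (vd i s) = (1 / (real N - 1)) * norm (\<Sum>j\<in>{..<N} - {i}. (switch_alpha t s * \<psi> (norm (x i s - x j s))) *\<^sub>R (v j s - v i s))"
    unfolding vd_def using N1 by simp
  also have "\<dots> \<le> (1 / (real N - 1)) * ((real N - 1) * (K * DV s))"
    using A N1 by (intro mult_left_mono) auto
  also have "\<dots> = K * DV s" using N1 by simp
  finally show ?thesis .
qed

lemma v_der: "i < N \<Longrightarrow> s \<in> {t n<..<t (Suc n)} \<Longrightarrow> (v i has_vector_derivative vd i s) (at s)"
  using v_ode unfolding vd_def by blast

lemma x_der: "i < N \<Longrightarrow> s \<in> {t n<..<t (Suc n)} \<Longrightarrow> (x i has_vector_derivative v i s) (at s)"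
  using x_ode by blast

lemma right_lim:
  assumes "continuous_on {0..} f" "0 \<le> s"
  shows "(f \<longlongrightarrow> f s) (at_right s)"
proof -
  have "(f \<longlongrightarrow> f s) (at s within {0..})" using assms by (simp add: continuous_on_def)
  then show ?thesis by (rule tendsto_within_subset) (use assms in auto)
qed

lemma pair_lim:
  assumes "\<forall>i<N. continuous_on {0..} (y i)" "0 \<le> s" "p \<in> P"
  shows "((\<lambda>s. norm (y (fst p) s - y (snd p) s)) \<longlongrightarrow> norm (y (fst p) s - y (snd p) s)) (at_right s)"
  by (rule right_lim) (use assms in \<open>auto simp: P_def intro!: continuous_intros\<close>)

lemma dini_DX:
  assumes s: "s \<in> {t n<..<t (Suc n)}" shows "dini_le (\<lambda>s. DX s) s (DV s)"
proof -
  have s0: "0 \<le> s" using s t_nonneg[of n] by auto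
  have "dini_le (\<lambda>s. Max ((\<lambda>p. norm (x (fst p) s - x (snd p) s)) ` P)) s (DV s)"
  proof (rule dini_Max[OF P_fin P_ne])
    show "\<forall>p\<in>P. ((\<lambda>s. norm (x (fst p) s - x (snd p) s)) \<longlongrightarrow> norm (x (fst p) s - x (snd p) s)) (at_right s)"
      using pair_lim[OF x_cont s0] by blast
    show "\<forall>p\<in>P. norm (x (fst p) s - x (snd p) s) = Max ((\<lambda>p. norm (x (fst p) s - x (snd p) s)) ` P) \<longrightarrow>
         dini_le (\<lambda>s. norm (x (fst p) s - x (snd p) s)) s (DV s)"
    proof (intro ballI impI)
      fix p assume p: "p \<in> P"
      then have ij: "fst p < N" "snd p < N" by (auto simp: P_def)
      have "((\<lambda>s. x (fst p) s - x (snd p) s) has_vector_derivative (v (fst p) s - v (snd p) s)) (at s)"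
        using x_der[OF ij(1) s] x_der[OF ij(2) s] by (rule has_vector_derivative_diff)
      then have "dini_le (\<lambda>s. norm (x (fst p) s - x (snd p) s)) s (norm (v (fst p) s - v (snd p) s))"
        by (rule dini_norm)
      then show "dini_le (\<lambda>s. norm (x (fst p) s - x (snd p) s)) s (DV s)"
        by (rule dini_mono) (use ij in \<open>auto intro: diam_ge\<close>)
    qed
  qed
  then show ?thesis by (simp add: diam_eq[symmetric])
qed

lemma dini_pair_V:
  assumes s: "s \<in> {t n<..<t (Suc n)}" and ij: "i < N" "j < N"
  shows "dini_le (\<lambda>s. norm (v i s - v j s)) s (2 * K * DV s)"
proof -
  have "((\<lambda>s. v i s - v j s) has_vector_derivative (vd i s - vd j s)) (at s)"
    using v_der[OF ij(1) s] v_der[OF ij(2) s] by (rule has_vector_derivative_diff)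
  then have "dini_le (\<lambda>s. norm (v i s - v j s)) s (norm (vd i s - vd j s))"
    by (rule dini_norm)
  moreover have "norm (vd i s - vd j s) \<le> 2 * K * DV s"
    using norm_triangle_ineq4[of "vd i s" "vd j s"] vd_bound[OF ij(1), of s] vd_bound[OF ij(2), of s] by simp
  ultimately show ?thesis by (rule dini_mono)
qed

lemma dini_DV:
  assumes s: "s \<in> {t n<..<t (Suc n)}" shows "dini_le (\<lambda>s. DV s) s (2 * K * DV s)"
proof -
  have s0: "0 \<le> s" using s t_nonneg[of n] by auto
  have "dini_le (\<lambda>s. Max ((\<lambda>p. norm (v (fst p) s - v (snd p) s)) ` P)) s (2 * K * DV s)"
  proof (rule dini_Max[OF P_fin P_ne])
    show "\<forall>p\<in>P. ((\<lambda>s. norm (v (fst p) s - v (snd p) s)) \<longlongrightarrow> norm (v (fst p) s - v (snd p) s)) (at_right s)"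
      using pair_lim[OF v_cont s0] by blast
    show "\<forall>p\<in>P. norm (v (fst p) s - v (snd p) s) = Max ((\<lambda>p. norm (v (fst p) s - v (snd p) s)) ` P) \<longrightarrow>
         dini_le (\<lambda>s. norm (v (fst p) s - v (snd p) s)) s (2 * K * DV s)"
      using dini_pair_V[OF s] by (auto simp: P_def)
  qed
  then show ?thesis by (simp add: diam_eq[symmetric])
qed

lemma dini_DV_pos:
  assumes s: "s \<in> {t (2*n)<..<t (2*n+1)}"
  shows "dini_le (\<lambda>s. DV s) s (- \<phi> (DX s) * DV s)"
proof -
  have s': "s \<in> {t (2*n)<..<t (Suc (2*n))}" using s by simp
  have s0: "0 \<le> s" using s t_nonneg[of "2*n"] by auto
  have alpha1: "switch_alpha t s = 1" using s alpha_pos by auto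
  have "dini_le (\<lambda>s. Max ((\<lambda>p. norm (v (fst p) s - v (snd p) s)) ` P)) s (- \<phi> (DX s) * DV s)"
  proof (rule dini_Max[OF P_fin P_ne])
    show "\<forall>p\<in>P. ((\<lambda>s. norm (v (fst p) s - v (snd p) s)) \<longlongrightarrow> norm (v (fst p) s - v (snd p) s)) (at_right s)"
      using pair_lim[OF v_cont s0] by blast
    show "\<forall>p\<in>P. norm (v (fst p) s - v (snd p) s) = Max ((\<lambda>p. norm (v (fst p) s - v (snd p) s)) ` P) \<longrightarrow>
         dini_le (\<lambda>s. norm (v (fst p) s - v (snd p) s)) s (- \<phi> (DX s) * DV s)"
    proof (intro ballI impI)
      fix p assume p: "p \<in> P" and act: "norm (v (fst p) s - v (snd p) s) = Max ((\<lambda>p. norm (v (fst p) s - v (snd p) s)) ` P)"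
      define i where "i = fst p"
      define j where "j = snd p"
      have ij: "i < N" "j < N" using p by (auto simp: P_def i_def j_def)
      have act': "norm (v i s - v j s) = DV s" using act by (simp add: diam_eq i_def j_def)
      show "dini_le (\<lambda>s. norm (v (fst p) s - v (snd p) s)) s (- \<phi> (DX s) * DV s)"
      proof (cases "DV s = 0")
        case True
        have "dini_le (\<lambda>s. norm (v i s - v j s)) s (2 * K * DV s)" by (rule dini_pair_V[OF s' ij])
        then show ?thesis unfolding i_def j_def by (rule dini_mono) (use True in simp)
      next
        case False
        then have nz: "v i s - v j s \<noteq> 0" using act' by auto
        have der: "((\<lambda>s. v i s - v j s) has_vector_derivative (vd i s - vd j s)) (at s)"
          using v_der[OF ij(1) s'] v_der[OF ij(2) s'] by (rule has_vector_derivative_diff)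
        have d1: "dini_le (\<lambda>s. norm (v i s - v j s)) s (((v i s - v j s) \<bullet> (vd i s - vd j s)) / norm (v i s - v j s))"
          using dini_norm_nz[OF der nz] by simp
        have ineq: "(v i s - v j s) \<bullet> (vd i s - vd j s) \<le> - \<phi> (DX s) * (norm (v i s - v j s))\<^sup>2"
        proof -
          have "(v i s - v j s) \<bullet> ((1 / (real N - 1)) *\<^sub>R (\<Sum>k\<in>{..<N}-{i}. (switch_alpha t s * \<psi> (norm (x i s - x k s))) *\<^sub>R (v k s - v i s))
            - (1 / (real N - 1)) *\<^sub>R (\<Sum>k\<in>{..<N}-{j}. (switch_alpha t s * \<psi> (norm (x j s - x k s))) *\<^sub>R (v k s - v j s)))
            \<le> - \<phi> (DX s) * (norm (v i s - v j s))\<^sup>2"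
          proof (rule active_ineq[OF N2 ij, where w = "\<lambda>k. v k s" and ps = "\<lambda>k l. switch_alpha t s * \<psi> (norm (x k s - x l s))"])
            show "\<forall>k<N. \<forall>l<N. norm (v k s - v l s) \<le> norm (v i s - v j s)"
              by (simp add: act' diam_ge)
            show "\<forall>k<N. \<forall>l<N. \<phi> (DX s) \<le> switch_alpha t s * \<psi> (norm (x k s - x l s))"
              using alpha1 by (auto intro!: phimin_le diam_ge)
            show "0 \<le> \<phi> (DX s)" using phimin_pos less_imp_le by blast
          qed
          then show ?thesis unfolding vd_def .
        qed
        have "((v i s - v j s) \<bullet> (vd i s - vd j s)) / norm (v i s - v j s) \<le> - \<phi> (DX s) * (norm (v i s - v j s))\<^sup>2 / norm (v i s - v j s)"
          by (rule divide_right_mono[OF ineq]) simp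
        also have "\<dots> = - \<phi> (DX s) * DV s" using False by (simp add: act' power2_eq_square)
        finally have "((v i s - v j s) \<bullet> (vd i s - vd j s)) / norm (v i s - v j s) \<le> - \<phi> (DX s) * DV s" .
        from dini_mono[OF d1 this] show ?thesis by (simp add: i_def j_def)
      qed
    qed
  qed
  then show ?thesis by (simp add: diam_eq[symmetric])
qed

end

context flock
begin

abbreviation "L s \<equiv> DV s + Phi \<psi> (DX s)"

lemma DX_cont: "continuous_on {0..} (\<lambda>s. DX s)" by (rule diam_cont[OF x_cont])
lemma DV_cont: "continuous_on {0..} (\<lambda>s. DV s)" by (rule diam_cont[OF v_cont])

lemma PhiDX_cont: "continuous_on {0..} (\<lambda>s. Phi \<psi> (DX s))"
  by (rule continuous_on_compose2[OF Phi_cont DX_cont]) (auto intro: diam_nonneg)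

lemma L_cont: "continuous_on {0..} (\<lambda>s. L s)"
  using DV_cont PhiDX_cont by (rule continuous_on_add)

lemma Phi0: "Phi \<psi> 0 = 0" unfolding Phi_def by simp

lemma Phi_nonneg: "0 \<le> y \<Longrightarrow> 0 \<le> Phi \<psi> y"
  using Phi_props[of 0 y] Phi0 by simp

lemma L_nonneg: "0 \<le> L s"
  using diam_nonneg[of v s] Phi_nonneg[OF diam_nonneg[of x s]] by simp

lemma sub0: "t m \<le> a \<Longrightarrow> {a..b} \<subseteq> {0..}"
  using t_nonneg[of m] by auto

lemma pos_phase_L:
  assumes "t (2*n) \<le> a" "a \<le> b" "b \<le> t (2*n+1)"
  shows "L b \<le> L a"
proof (rule dini_mono_open[OF assms(2)])
  show "continuous_on {a..b} (\<lambda>s. L s)"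
    using L_cont sub0[OF assms(1)] by (rule continuous_on_subset)
  show "\<forall>s\<in>{a<..<b}. dini_le (\<lambda>s. L s) s 0"
  proof
    fix s assume s: "s \<in> {a<..<b}"
    then have s1: "s \<in> {t (2*n)<..<t (2*n+1)}" using assms by auto
    then have s2: "s \<in> {t (2*n)<..<t (Suc (2*n))}" by simp
    have d1: "dini_le (\<lambda>s. DV s) s (- \<phi> (DX s) * DV s)" by (rule dini_DV_pos[OF s1])
    have d2: "dini_le (\<lambda>s. Phi \<psi> (DX s)) s (\<phi> (DX s) * DV s)"
    proof (rule dini_comp[where \<Phi> = "Phi \<psi>" and \<phi> = \<phi> and G = "\<lambda>s. DX s"])
      show "\<And>x y. 0 \<le> x \<Longrightarrow> x \<le> y \<Longrightarrow> Phi \<psi> y - Phi \<psi> x \<le> \<phi> x * (y - x) \<and> Phi \<psi> x \<le> Phi \<psi> y"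
        by (rule Phi_props)
      show "0 \<le> \<phi> (DX s)" using phimin_pos less_imp_le by blast
      show "dini_le (\<lambda>s. DX s) s (DV s)" by (rule dini_DX[OF s2])
      show "0 \<le> DV s" by (rule diam_nonneg)
      show "\<And>y. 0 \<le> DX y" by (rule diam_nonneg)
    qed
    have "dini_le (\<lambda>s. L s) s (- \<phi> (DX s) * DV s + \<phi> (DX s) * DV s)"
      using dini_add[OF d1 d2] by simp
    then show "dini_le (\<lambda>s. L s) s 0" by simp
  qed
qed

lemma pos_phase_decay:
  assumes "t (2*n) \<le> a" "a \<le> b" "b \<le> t (2*n+1)"
    and c: "\<forall>s\<in>{a..b}. c \<le> \<phi> (DX s)"
  shows "DV b \<le> DV a * exp (- c * (b - a))"
proof (rule gronwall_dini[OF assms(2)])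
  show "continuous_on {a..b} (\<lambda>s. DV s)"
    using DV_cont sub0[OF assms(1)] by (rule continuous_on_subset)
  show "\<forall>s\<in>{a<..<b}. dini_le (\<lambda>s. DV s) s (- c * DV s)"
  proof
    fix s assume s: "s \<in> {a<..<b}"
    then have s1: "s \<in> {t (2*n)<..<t (2*n+1)}" using assms by auto
    have "- \<phi> (DX s) * DV s \<le> - c * DV s"
      using c s diam_nonneg[of v s] by (auto intro: mult_right_mono)
    with dini_DV_pos[OF s1] show "dini_le (\<lambda>s. DV s) s (- c * DV s)" by (rule dini_mono)
  qed
qed

lemma any_phase_DV:
  assumes "t m \<le> a" "a \<le> b" "b \<le> t (Suc m)"
  shows "DV b \<le> DV a * exp (2 * K * (b - a))"
proof (rule gronwall_dini[OF assms(2)])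
  show "continuous_on {a..b} (\<lambda>s. DV s)"
    using DV_cont sub0[OF assms(1)] by (rule continuous_on_subset)
  show "\<forall>s\<in>{a<..<b}. dini_le (\<lambda>s. DV s) s (2 * K * DV s)"
  proof
    fix s assume s: "s \<in> {a<..<b}"
    then have s1: "s \<in> {t m<..<t (Suc m)}" using assms by auto
    show "dini_le (\<lambda>s. DV s) s (2 * K * DV s)" by (rule dini_DV[OF s1])
  qed
qed

lemma any_phase_DX:
  assumes "t m \<le> a" "a \<le> b" "b \<le> t (Suc m)" and B: "\<forall>s\<in>{a..b}. DV s \<le> B"
  shows "DX b \<le> DX a + B * (b - a)"
proof (rule lin_dini[OF assms(2), where g = "\<lambda>s. DV s"])
  show "continuous_on {a..b} (\<lambda>s. DX s)"
    using DX_cont sub0[OF assms(1)] by (rule continuous_on_subset)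
  show "\<forall>s\<in>{a<..<b}. dini_le (\<lambda>s. DX s) s (DV s) \<and> DV s \<le> B"
  proof
    fix s assume s: "s \<in> {a<..<b}"
    then have s1: "s \<in> {t m<..<t (Suc m)}" using assms by auto
    show "dini_le (\<lambda>s. DX s) s (DV s) \<and> DV s \<le> B" using dini_DX[OF s1] B s by auto
  qed
qed

lemma any_phase_L:
  assumes ab: "t m \<le> a" "a \<le> b" "b \<le> t (Suc m)"
  shows "L b \<le> L a * exp (3 * K * (b - a))"
proof -
  define \<tau> where "\<tau> = b - a"
  define D where "D = DV a"
  define B where "B = D * exp (2 * K * \<tau>)"
  have \<tau>0: "0 \<le> \<tau>" using ab unfolding \<tau>_def by simp
  have D0: "0 \<le> D" unfolding D_def by (rule diam_nonneg)
  have Bs: "\<forall>s\<in>{a..b}. DV s \<le> B"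
  proof
    fix s assume s: "s \<in> {a..b}"
    have "DV s \<le> D * exp (2 * K * (s - a))" unfolding D_def
      using any_phase_DV[of m a s] ab s by auto
    also have "\<dots> \<le> B" unfolding B_def \<tau>_def
      using D0 s K_pos by (intro mult_left_mono) auto
    finally show "DV s \<le> B" .
  qed
  have DVb: "DV b \<le> B" using Bs ab by auto
  have DXb: "DX b \<le> DX a + B * \<tau>" unfolding \<tau>_def using any_phase_DX[OF ab Bs] .
  have B0: "0 \<le> B" unfolding B_def using D0 by simp
  have PhiB: "Phi \<psi> (DX b) \<le> Phi \<psi> (DX a) + K * (B * \<tau>)"
  proof (cases "DX a \<le> DX b")
    case True
    have "\<bar>Phi \<psi> (DX b) - Phi \<psi> (DX a)\<bar> \<le> \<psi> 0 * (DX b - DX a)"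
      using Phi_lip[OF diam_nonneg True] .
    also have "\<dots> \<le> K * (B * \<tau>)"
      using DXb True psi_le_K[of 0] pos[of 0] by (intro mult_mono) auto
    finally show ?thesis by linarith
  next
    case False
    then have "Phi \<psi> (DX b) \<le> Phi \<psi> (DX a)" using Phi_props[of "DX b" "DX a"] diam_nonneg[of x b] by auto
    moreover have "0 \<le> K * (B * \<tau>)" using K_pos B0 \<tau>0 by simp
    ultimately show ?thesis by linarith
  qed
  have e1: "1 + K * \<tau> \<le> exp (K * \<tau>)" by (rule exp_ge_add_one_self)
  have "L b \<le> B + K * (B * \<tau>) + Phi \<psi> (DX a)" using DVb PhiB by linarith
  also have "B + K * (B * \<tau>) = D * (exp (2 * K * \<tau>) * (1 + K * \<tau>))" unfolding B_def by (simp add: algebra_simps)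
  also have "\<dots> \<le> D * (exp (2 * K * \<tau>) * exp (K * \<tau>))"
    using D0 e1 by (intro mult_left_mono) auto
  also have "exp (2 * K * \<tau>) * exp (K * \<tau>) = exp (3 * K * \<tau>)"
    by (simp add: mult_exp_exp algebra_simps)
  also have "Phi \<psi> (DX a) \<le> Phi \<psi> (DX a) * exp (3 * K * \<tau>)"
  proof -
    have P0: "0 \<le> Phi \<psi> (DX a)" using Phi_nonneg[OF diam_nonneg] .
    have "1 \<le> exp (3 * K * \<tau>)" using K_pos \<tau>0 by simp
    from mult_left_mono[OF this P0] show ?thesis by simp
  qed
  finally have "L b \<le> D * exp (3 * K * \<tau>) + Phi \<psi> (DX a) * exp (3 * K * \<tau>)" by simp
  then show ?thesis unfolding D_def \<tau>_def by (simp add: algebra_simps)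
qed

end

context flock
begin

definition tau :: "nat \<Rightarrow> real" where "tau p = t (2*p+2) - t (2*p+1)"
definition S :: "nat \<Rightarrow> real" where "S n = (\<Sum>p<n. tau p)"
definition T :: real where "T = suminf tau"

lemma tau_pos: "0 < tau p"
  unfolding tau_def using t_less[of "2*p+1" "2*p+2"] by simp

lemma tau_lt: "K * tau p < ln 2"
  using gap_neg K_pos unfolding tau_def by (simp add: field_simps)

lemma key_ln:
  fixes y :: real assumes y0: "0 \<le> y" and y2: "y < ln 2"
  shows "2 * y \<le> ln (exp y / (2 - exp y))"
proof -
  define u where "u = exp y"
  have u1: "1 \<le> u" unfolding u_def using y0 by simp
  have u2: "u < 2" unfolding u_def using y2 by (metis exp_less_cancel_iff exp_ln zero_less_numeral)
  have "exp (2 * y) = u * u" unfolding u_def by (simp add: mult_exp_exp)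
  also have "u * u \<le> u / (2 - u)"
  proof -
    have "u * u * (2 - u) \<le> u"
    proof -
      have "0 \<le> u * (u - 1)^2" using u1 by simp
      then show ?thesis by (simp add: power2_eq_square algebra_simps)
    qed
    then show ?thesis using u2 by (simp add: field_simps)
  qed
  finally have "exp (2 * y) \<le> exp y / (2 - exp y)" unfolding u_def .
  moreover have "0 < exp y / (2 - exp y)" using u2 unfolding u_def by simp
  ultimately show ?thesis by (simp add: ln_ge_iff)
qed

lemma tau_summable: "summable tau"
proof -
  have "summable (\<lambda>p. (1 / (2 * K)) * ln (exp (K * (t (2*p+2) - t (2*p+1))) / (2 - exp (K * (t (2*p+2) - t (2*p+1))))))"
    using sum_fin by (rule summable_mult)
  then show ?thesis
  proof (rule summable_comparison_test')
    fix n :: nat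
    have "2 * (K * tau n) \<le> ln (exp (K * tau n) / (2 - exp (K * tau n)))"
      using tau_lt[of n] tau_pos[of n] K_pos by (intro key_ln) auto
    then have "tau n \<le> (1 / (2 * K)) * ln (exp (K * tau n) / (2 - exp (K * tau n)))"
      using K_pos by (simp add: field_simps)
    then show "norm (tau n) \<le> (1 / (2 * K)) * ln (exp (K * (t (2*n+2) - t (2*n+1))) / (2 - exp (K * (t (2*n+2) - t (2*n+1)))))"
      using tau_pos[of n] unfolding tau_def by simp
  qed
qed

lemma S_le_T: "S n \<le> T"
  unfolding S_def T_def using tau_summable tau_pos by (intro sum_le_suminf) (auto intro: less_imp_le)

lemma S_Suc: "S (Suc n) = S n + tau n" unfolding S_def by simp

lemma S_nonneg: "0 \<le> S n" unfolding S_def using tau_pos by (auto intro: sum_nonneg less_imp_le)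

lemma t_2Suc: "t (2 * Suc n) = t (2*n+2)" by (simp add: algebra_simps)

lemma L_even: "L (t (2*n)) \<le> L 0 * exp (3 * K * S n)"
proof (induction n)
  case 0 then show ?case using t0 by (simp add: S_def)
next
  case (Suc n)
  have a: "L (t (2*n+2)) \<le> L (t (2*n+1)) * exp (3 * K * tau n)"
    using any_phase_L[of "2*n+1" "t (2*n+1)" "t (2*n+2)"] t_le[of "2*n+1" "2*n+2"] unfolding tau_def by simp
  have b: "L (t (2*n+1)) \<le> L (t (2*n))"
    using pos_phase_L[of n "t (2*n)" "t (2*n+1)"] t_le[of "2*n" "2*n+1"] by simp
  have "L (t (2*n+2)) \<le> L (t (2*n)) * exp (3 * K * tau n)"
    using a b by (meson exp_ge_zero mult_right_mono order_trans)
  also have "\<dots> \<le> L 0 * exp (3 * K * S n) * exp (3 * K * tau n)"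
    using Suc.IH by (intro mult_right_mono) auto
  also have "\<dots> = L 0 * exp (3 * K * S (Suc n))"
    by (simp add: S_Suc mult_exp_exp algebra_simps)
  finally show ?case by (simp add: t_2Suc)
qed

lemma parity: fixes m :: nat obtains n where "m = 2*n" | n where "m = 2*n+1"
  by (metis odd_two_times_div_two_succ even_two_times_div_two)

lemma L_bound:
  assumes s0: "0 \<le> s" shows "L s \<le> L 0 * exp (3 * K * T)"
proof -
  obtain m where m: "t m \<le> s" "s < t (Suc m)" using t_cover[OF s0] by blast
  have L00: "0 \<le> L 0" by (rule L_nonneg)
  have fin: "L 0 * exp (3 * K * S k) \<le> L 0 * exp (3 * K * T)" for k
    using L00 S_le_T[of k] K_pos by (intro mult_left_mono) auto
  show ?thesis
  proof (cases m rule: parity)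
    case (1 n)
    have "L s \<le> L (t (2*n))" using pos_phase_L[of n "t (2*n)" s] m 1 by simp
    also have "\<dots> \<le> L 0 * exp (3 * K * S n)" by (rule L_even)
    finally show ?thesis using fin[of n] by linarith
  next
    case (2 n)
    have "L s \<le> L (t (2*n+1)) * exp (3 * K * (s - t (2*n+1)))"
      using any_phase_L[of m "t m" s] m 2 by simp
    also have "\<dots> \<le> L (t (2*n)) * exp (3 * K * tau n)"
    proof (rule mult_mono)
      show "L (t (2*n+1)) \<le> L (t (2*n))"
        using pos_phase_L[of n "t (2*n)" "t (2*n+1)"] t_le[of "2*n" "2*n+1"] by simp
      show "exp (3 * K * (s - t (2*n+1))) \<le> exp (3 * K * tau n)"
        using m 2 K_pos unfolding tau_def by (simp add: mult_left_mono)
      show "0 \<le> L (t (2*n))" by (rule L_nonneg)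
    qed simp
    also have "\<dots> \<le> L 0 * exp (3 * K * S n) * exp (3 * K * tau n)"
      using L_even[of n] by (intro mult_right_mono) auto
    also have "\<dots> = L 0 * exp (3 * K * S (Suc n))"
      by (simp add: S_Suc mult_exp_exp algebra_simps)
    finally show ?thesis using fin[of "Suc n"] by linarith
  qed
qed

lemma DX_bounded: "\<exists>R\<ge>0. \<forall>s\<ge>0. DX s \<le> R"
proof -
  obtain R where R: "R \<ge> 0" "Phi \<psi> R > L 0 * exp (3 * K * T)"
    using Phi_unbounded[OF psi_int] by blast
  have "DX s \<le> R" if s: "s \<ge> 0" for s
  proof (rule ccontr)
    assume "\<not> DX s \<le> R"
    then have "Phi \<psi> R \<le> Phi \<psi> (DX s)" using Phi_props[of R "DX s"] R by auto
    also have "\<dots> \<le> L s" using diam_nonneg[of v s] by simp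
    also have "\<dots> \<le> L 0 * exp (3 * K * T)" by (rule L_bound[OF s])
    finally show False using R by simp
  qed
  then show ?thesis using R by blast
qed

end

context flock
begin

lemma decay:
  assumes R0: "R \<ge> 0" and R: "\<forall>s\<ge>0. DX s \<le> R"
  shows "((\<lambda>s. DV s) \<longlongrightarrow> 0) at_top"
proof -
  define c where "c = \<phi> R"
  have c0: "0 < c" unfolding c_def by (rule phimin_pos)
  have cphi: "c \<le> \<phi> (DX s)" if "0 \<le> s" for s
    unfolding c_def using R that by (intro phimin_anti) auto
  define q where "q = exp (- c / K)"
  have q0: "0 < q" and q1: "q < 1" unfolding q_def using c0 K_pos by auto
  define A where "A = DV 0 * exp (2 * K * T)"
  have DV00: "0 \<le> DV 0" by (rule diam_nonneg)
  have posd: "DV b \<le> DV a * exp (- c * (b - a))" if "t (2*n) \<le> a" "a \<le> b" "b \<le> t (2*n+1)" for n a b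
    using pos_phase_decay[OF that] cphi that t_nonneg[of "2*n"] by auto
  have step1: "DV (t (2*n+1)) \<le> DV (t (2*n)) * q" for n
  proof -
    have "DV (t (2*n+1)) \<le> DV (t (2*n)) * exp (- c * (t (2*n+1) - t (2*n)))"
      using posd[of n "t (2*n)" "t (2*n+1)"] t_le[of "2*n" "2*n+1"] by simp
    also have "\<dots> \<le> DV (t (2*n)) * q"
    proof (rule mult_left_mono)
      have "1 / K < t (2*n+1) - t (2*n)" using gap_pos by simp
      then have "c * (1 / K) \<le> c * (t (2*n+1) - t (2*n))" using c0 by (intro mult_left_mono) auto
      then show "exp (- c * (t (2*n+1) - t (2*n))) \<le> q" unfolding q_def by simp
    qed (rule diam_nonneg)
    finally show ?thesis .
  qed
  have step2: "DV (t (2*n+2)) \<le> DV (t (2*n+1)) * exp (2 * K * tau n)" for n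
    using any_phase_DV[of "2*n+1" "t (2*n+1)" "t (2*n+2)"] t_le[of "2*n+1" "2*n+2"] unfolding tau_def by simp
  have DV_even: "DV (t (2*n)) \<le> DV 0 * exp (2 * K * S n) * q ^ n" for n
  proof (induction n)
    case 0 then show ?case using t0 by (simp add: S_def)
  next
    case (Suc n)
    have "DV (t (2*n+2)) \<le> DV (t (2*n)) * q * exp (2 * K * tau n)"
      using step2[of n] step1[of n] by (meson exp_ge_zero mult_right_mono order_trans)
    also have "\<dots> \<le> DV 0 * exp (2 * K * S n) * q ^ n * q * exp (2 * K * tau n)"
      using Suc.IH q0 by (intro mult_right_mono) auto
    also have "\<dots> = DV 0 * exp (2 * K * S (Suc n)) * q ^ Suc n"
      by (simp add: S_Suc mult_exp_exp algebra_simps)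
    finally show ?case by (simp add: t_2Suc)
  qed
  have finS: "DV 0 * exp (2 * K * S k) \<le> A" for k
    unfolding A_def using DV00 S_le_T[of k] K_pos by (intro mult_left_mono) auto
  have phase: "DV s \<le> A * q ^ n" if s: "t (2*n) \<le> s" "s \<le> t (2*n+2)" for n s
  proof (cases "s \<le> t (2*n+1)")
    case True
    have "DV s \<le> DV (t (2*n)) * exp (- c * (s - t (2*n)))"
      using posd[of n "t (2*n)" s] s True by simp
    also have "\<dots> \<le> DV (t (2*n))"
    proof -
      have "exp (- c * (s - t (2*n))) \<le> 1" using c0 s by simp
      then show ?thesis using diam_nonneg[of v "t (2*n)"] by (simp add: mult_left_le)
    qed
    also have "\<dots> \<le> DV 0 * exp (2 * K * S n) * q ^ n" by (rule DV_even)
    also have "\<dots> \<le> A * q ^ n" using finS[of n] q0 by (intro mult_right_mono) auto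
    finally show ?thesis .
  next
    case False
    have "DV s \<le> DV (t (2*n+1)) * exp (2 * K * (s - t (2*n+1)))"
      using any_phase_DV[of "2*n+1" "t (2*n+1)" s] s False by simp
    also have "\<dots> \<le> DV (t (2*n)) * q * exp (2 * K * tau n)"
    proof (rule mult_mono)
      show "exp (2 * K * (s - t (2*n+1))) \<le> exp (2 * K * tau n)"
        using s K_pos unfolding tau_def by (simp add: mult_left_mono)
      show "0 \<le> DV (t (2*n) ) * q" using q0 diam_nonneg[of v "t (2*n)"] by simp
    qed (use step1[of n] in auto)
    also have "\<dots> \<le> DV 0 * exp (2 * K * S n) * q ^ n * q * exp (2 * K * tau n)"
      using DV_even[of n] q0 by (intro mult_right_mono) auto
    also have "\<dots> = DV 0 * exp (2 * K * S (Suc n)) * q ^ Suc n"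
      by (simp add: S_Suc mult_exp_exp algebra_simps)
    also have "\<dots> \<le> A * q ^ Suc n" using finS[of "Suc n"] q0 by (intro mult_right_mono) auto
    also have "\<dots> \<le> A * q ^ n"
    proof -
      have A0: "0 \<le> A" unfolding A_def using DV00 by simp
      have "q ^ Suc n \<le> q ^ n" using q0 q1 by (simp add: power_decreasing_iff less_imp_le mult_left_le_one_le)
      then show ?thesis using A0 by (intro mult_left_mono) auto
    qed
    finally show ?thesis .
  qed
  show ?thesis
  proof (rule order_tendstoI)
    fix a :: real assume "a < 0"
    then show "eventually (\<lambda>s. a < DV s) at_top"
      using diam_nonneg[of v] by (auto intro: always_eventually less_le_trans)
  next
    fix a :: real assume a: "0 < a"
    have "(\<lambda>n. A * q ^ n) \<longlonglongrightarrow> A * 0"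
      using q0 q1 by (intro tendsto_intros LIMSEQ_power_zero) auto
    then have "eventually (\<lambda>n. A * q ^ n < a) sequentially"
      using a by (intro order_tendstoD) auto
    then obtain n0 where n0: "A * q ^ n0 < a" by (auto simp: eventually_sequentially)
    have "\<forall>s\<ge>t (2*n0). DV s < a"
    proof (intro allI impI)
      fix s assume s: "t (2*n0) \<le> s"
      then have s0: "0 \<le> s" using t_nonneg[of "2*n0"] by simp
      obtain m where m: "t m \<le> s" "s < t (Suc m)" using t_cover[OF s0] by blast
      have "2*n0 < Suc m"
      proof (rule ccontr)
        assume "\<not> 2*n0 < Suc m"
        then have "t (Suc m) \<le> t (2*n0)" by (intro t_le) auto
        with m s show False by simp
      qed
      obtain n where n: "t (2*n) \<le> s" "s \<le> t (2*n+2)" "n0 \<le> n"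
      proof (cases m rule: parity)
        case (1 n)
        then show ?thesis using that[of n] m \<open>2*n0 < Suc m\<close> t_le[of "2*n+1" "2*n+2"] by simp
      next
        case (2 n)
        have "t (2*n) \<le> t m" using 2 by (intro t_le) simp
        then show ?thesis using that[of n] m \<open>2*n0 < Suc m\<close> 2 by simp
      qed
      have "DV s \<le> A * q ^ n" by (rule phase[OF n(1,2)])
      also have "\<dots> \<le> A * q ^ n0"
      proof -
        have A0: "0 \<le> A" unfolding A_def using DV00 by simp
        have "q ^ n \<le> q ^ n0" using q0 q1 n(3) by (intro power_decreasing) auto
        then show ?thesis using A0 by (intro mult_left_mono) auto
      qed
      finally show "DV s < a" using n0 by simp
    qed
    then show "eventually (\<lambda>s. DV s < a) at_top" by (auto simp: eventually_at_top_linorder)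
  qed
qed

lemma main: "(\<exists>dstar>0. \<forall>s\<ge>0. DX s \<le> dstar) \<and> ((\<lambda>s. DV s) \<longlongrightarrow> 0) at_top"
proof -
  obtain R where R: "R \<ge> 0" "\<forall>s\<ge>0. DX s \<le> R" using DX_bounded by blast
  have "\<forall>s\<ge>0. DX s \<le> R + 1" using R by force
  moreover have "R + 1 > 0" using R by simp
  ultimately show ?thesis using decay[OF R] by blast
qed

end

theorem theorem6p1:
  fixes N :: nat
    and \<psi> :: "real \<Rightarrow> real"
    and K :: real
    and t :: "nat \<Rightarrow> real"
    and x v :: "nat \<Rightarrow> real \<Rightarrow> real ^ 'd"
  assumes N2: "N \<ge> 2"
    and psi_pos: "\<forall>r. \<psi> r > 0"
    and psi_bdd: "bounded (range \<psi>)"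
    and psi_cont: "continuous_on UNIV \<psi>"
    and K_def: "K = (SUP r. \<psi> r)"
    and psi_int: "(\<integral>\<^sup>+ y\<in>{0..}. ennreal (Inf (\<psi> ` {0..y})) \<partial>lborel) = \<infinity>"
    and t_mono: "strict_mono t"
    and t0: "t 0 = 0"
    and t_lim: "filterlim t at_top sequentially"
    and gap_neg: "\<forall>n. t (2*n+2) - t (2*n+1) < ln 2 / K"
    and gap_pos: "\<forall>n. t (2*n+1) - t (2*n) > 1 / K"
    and sum_fin: "summable (\<lambda>p. ln (exp (K * (t (2*p+2) - t (2*p+1)))
                                    / (2 - exp (K * (t (2*p+2) - t (2*p+1))))))"
    and x_cont: "\<forall>i<N. continuous_on {0..} (x i)"
    and v_cont: "\<forall>i<N. continuous_on {0..} (v i)"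
    and x_ode: "\<forall>i<N. \<forall>n. \<forall>s\<in>{t n<..<t (Suc n)}.
                  (x i has_vector_derivative v i s) (at s)"
    and v_ode: "\<forall>i<N. \<forall>n. \<forall>s\<in>{t n<..<t (Suc n)}.
                  (v i has_vector_derivative
                     ((1 / (real N - 1)) *\<^sub>R
                       (\<Sum>j\<in>{..<N} - {i}. (switch_alpha t s * \<psi> (norm (x i s - x j s)))
                                             *\<^sub>R (v j s - v i s)))) (at s)"
  shows "(\<exists>dstar>0. \<forall>s\<ge>0. diamX N x s \<le> dstar)
         \<and> ((\<lambda>s. diamX N v s) \<longlongrightarrow> 0) at_top"
  proof -
  interpret flock \<psi> N K t x v
    by unfold_locales (use assms in auto)
  show ?thesis by (rule main)
qed

end
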